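(* Let $\Phi$ be irreducible with highest root $\gamma$ and $\mathfrak h_\gamma=\Phi^+\setminus\{\gamma\}$. Let $v,w\in W$ with $v>w$ in Bruhat order. Then $\ell_\gamma(w)=\ell_\gamma(v)$ if and only if all of the following hold: $v$ is a cover of $w$; $N_w=N^\gamma_w$; and there exists $\beta\in N_v$ with $v^{-1}\beta=-\gamma$.
   Context: $\Phi$ is a crystallographic root system in a real Euclidean space with base $\Delta$, positive roots $\Phi^+$, $\Phi^-=-\Phi^+$, Weyl group $W$ with length $\ell$; $s_\alpha$ is the reflection through $\alpha$. $\Phi$ irreducible means it is not a disjoint union of two root systems; then there is a unique highest root $\gamma\in\Phi^+$ with $\alpha\prec\gamma$ for all $\alpha\in\Phi$, where $\alpha\prec\beta$ means $\beta-\alpha$ is a sum of positive roots. For $w\in W$, $N_w=\{\beta\in\Phi^+: w^{-1}\beta\in\Phi^-\}$, $N^\gamma_w=\{\beta\in\Phi^+: w^{-1}\beta\in-\mathfrak h_\gamma\}$, and $\ell_\gamma(w)=|N^\gamma_w|$. The Bruhat graph has vertex set $W$ and edges $u\to s_\alpha u$ for $\alpha\in\Phi^+$ with $(s_\alpha u)^{-1}\alpha\in\Phi^-$; Bruhat order $<$ is the transitive closure. $v$ is a cover of $w$ if $v=s_\alpha w$ with $w\to v$ a Bruhat graph edge and $\ell(v)=\ell(w)+1$. *)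

theory Defs
  imports "HOL-Analysis.Analysis"
begin

definition refl :: "'a::euclidean_space \<Rightarrow> 'a \<Rightarrow> 'a" where
  "refl \<alpha> x = x - (2 * (x \<bullet> \<alpha>) / (\<alpha> \<bullet> \<alpha>)) *\<^sub>R \<alpha>"

definition root_system :: "'a::euclidean_space set \<Rightarrow> bool" where
  "root_system \<Phi> \<longleftrightarrow> finite \<Phi> \<and> 0 \<notin> \<Phi> \<and> span \<Phi> = UNIV
     \<and> (\<forall>\<alpha>\<in>\<Phi>. \<forall>\<beta>\<in>\<Phi>. refl \<alpha> \<beta> \<in> \<Phi>)
     \<and> (\<forall>\<alpha>\<in>\<Phi>. \<forall>c::real. c *\<^sub>R \<alpha> \<in> \<Phi> \<longrightarrow> c = 1 \<or> c = -1)
     \<and> (\<forall>\<alpha>\<in>\<Phi>. \<forall>\<beta>\<in>\<Phi>. 2 * (\<beta> \<bullet> \<alpha>) / (\<alpha> \<bullet> \<alpha>) \<in> \<int>)"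

definition irreducible_rs :: "'a::euclidean_space set \<Rightarrow> bool" where
  "irreducible_rs \<Phi> \<longleftrightarrow> \<not> (\<exists>\<Phi>1 \<Phi>2. \<Phi>1 \<noteq> {} \<and> \<Phi>2 \<noteq> {} \<and> \<Phi>1 \<union> \<Phi>2 = \<Phi> \<and> \<Phi>1 \<inter> \<Phi>2 = {}
      \<and> (\<forall>\<alpha>\<in>\<Phi>1. \<forall>\<beta>\<in>\<Phi>2. \<alpha> \<bullet> \<beta> = 0))"

definition is_base :: "'a::euclidean_space set \<Rightarrow> 'a set \<Rightarrow> bool" where
  "is_base \<Phi> \<Delta> \<longleftrightarrow> \<Delta> \<subseteq> \<Phi> \<and> independent \<Delta> \<and>
     (\<forall>\<beta>\<in>\<Phi>. \<exists>c. (\<forall>\<delta>\<in>\<Delta>. c \<delta> \<in> \<int>) \<and> \<beta> = (\<Sum>\<delta>\<in>\<Delta>. c \<delta> *\<^sub>R \<delta>) \<and>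
        ((\<forall>\<delta>\<in>\<Delta>. c \<delta> \<ge> 0) \<or> (\<forall>\<delta>\<in>\<Delta>. c \<delta> \<le> 0)))"

definition pos_roots :: "'a::euclidean_space set \<Rightarrow> 'a set \<Rightarrow> 'a set" where
  "pos_roots \<Phi> \<Delta> = {\<beta>\<in>\<Phi>. \<exists>c. (\<forall>\<delta>\<in>\<Delta>. c \<delta> \<in> \<int> \<and> c \<delta> \<ge> 0) \<and> \<beta> = (\<Sum>\<delta>\<in>\<Delta>. c \<delta> *\<^sub>R \<delta>)}"

definition neg_roots :: "'a::euclidean_space set \<Rightarrow> 'a set \<Rightarrow> 'a set" where
  "neg_roots \<Phi> \<Delta> = uminus ` pos_roots \<Phi> \<Delta>"

definition prec :: "'a::euclidean_space set \<Rightarrow> 'a set \<Rightarrow> 'a \<Rightarrow> 'a \<Rightarrow> bool" where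
  "prec \<Phi> \<Delta> \<alpha> \<beta> \<longleftrightarrow> (\<exists>m::'a \<Rightarrow> nat. \<beta> - \<alpha> = (\<Sum>\<delta>\<in>pos_roots \<Phi> \<Delta>. real (m \<delta>) *\<^sub>R \<delta>))"

inductive_set weyl :: "'a::euclidean_space set \<Rightarrow> ('a \<Rightarrow> 'a) set" for \<Phi> where
  weyl_id: "id \<in> weyl \<Phi>"
| weyl_step: "w \<in> weyl \<Phi> \<Longrightarrow> \<alpha> \<in> \<Phi> \<Longrightarrow> refl \<alpha> \<circ> w \<in> weyl \<Phi>"

definition wlen :: "'a::euclidean_space set \<Rightarrow> ('a \<Rightarrow> 'a) \<Rightarrow> nat" where
  "wlen \<Delta> w = (LEAST n. \<exists>as. length as = n \<and> set as \<subseteq> \<Delta> \<and> w = foldr (\<lambda>\<alpha> f. refl \<alpha> \<circ> f) as id)"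

definition Nset :: "'a::euclidean_space set \<Rightarrow> 'a set \<Rightarrow> ('a \<Rightarrow> 'a) \<Rightarrow> 'a set" where
  "Nset \<Phi> \<Delta> w = {\<beta>\<in>pos_roots \<Phi> \<Delta>. inv w \<beta> \<in> neg_roots \<Phi> \<Delta>}"

definition Ngam :: "'a::euclidean_space set \<Rightarrow> 'a set \<Rightarrow> 'a \<Rightarrow> ('a \<Rightarrow> 'a) \<Rightarrow> 'a set" where
  "Ngam \<Phi> \<Delta> \<gamma> w = {\<beta>\<in>pos_roots \<Phi> \<Delta>. inv w \<beta> \<in> uminus ` (pos_roots \<Phi> \<Delta> - {\<gamma>})}"

definition len_gam :: "'a::euclidean_space set \<Rightarrow> 'a set \<Rightarrow> 'a \<Rightarrow> ('a \<Rightarrow> 'a) \<Rightarrow> nat" where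
  "len_gam \<Phi> \<Delta> \<gamma> w = card (Ngam \<Phi> \<Delta> \<gamma> w)"

definition bruhat_edges :: "'a::euclidean_space set \<Rightarrow> 'a set \<Rightarrow> (('a \<Rightarrow> 'a) \<times> ('a \<Rightarrow> 'a)) set" where
  "bruhat_edges \<Phi> \<Delta> = {(u, refl \<alpha> \<circ> u) | u \<alpha>. u \<in> weyl \<Phi> \<and> \<alpha> \<in> pos_roots \<Phi> \<Delta>
      \<and> inv (refl \<alpha> \<circ> u) \<alpha> \<in> neg_roots \<Phi> \<Delta>}"

definition bruhat_less :: "'a::euclidean_space set \<Rightarrow> 'a set \<Rightarrow> ('a \<Rightarrow> 'a) \<Rightarrow> ('a \<Rightarrow> 'a) \<Rightarrow> bool" where
  "bruhat_less \<Phi> \<Delta> w v \<longleftrightarrow> (w, v) \<in> (bruhat_edges \<Phi> \<Delta>)\<^sup>+"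

definition is_cover :: "'a::euclidean_space set \<Rightarrow> 'a set \<Rightarrow> ('a \<Rightarrow> 'a) \<Rightarrow> ('a \<Rightarrow> 'a) \<Rightarrow> bool" where
  "is_cover \<Phi> \<Delta> v w \<longleftrightarrow> (\<exists>\<alpha>\<in>pos_roots \<Phi> \<Delta>. v = refl \<alpha> \<circ> w \<and> (w, v) \<in> bruhat_edges \<Phi> \<Delta>
      \<and> wlen \<Delta> v = wlen \<Delta> w + 1)"

end

theory Submission
  imports Defs
begin

lemma refl_linear: "linear (refl \<alpha>)"
  unfolding refl_def by (intro linearI) (auto simp: inner_add_left algebra_simps add_divide_distrib scaleR_left_distrib diff_divide_distrib)

lemma refl_self: "\<alpha> \<noteq> 0 \<Longrightarrow> refl \<alpha> \<alpha> = - \<alpha>"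
  unfolding refl_def by (simp add: scaleR_2)

lemma refl_invol: "\<alpha> \<noteq> 0 \<Longrightarrow> refl \<alpha> (refl \<alpha> x) = x"
  unfolding refl_def by (simp add: inner_diff_left algebra_simps)

lemma refl_comp_self: "\<alpha> \<noteq> 0 \<Longrightarrow> refl \<alpha> \<circ> refl \<alpha> = id"
  by (auto simp: refl_invol)

lemma refl_comp_self2: "\<alpha> \<noteq> 0 \<Longrightarrow> refl \<alpha> \<circ> (refl \<alpha> \<circ> f) = f"
  by (auto simp: refl_invol)

lemma refl_inner: "\<alpha> \<noteq> 0 \<Longrightarrow> refl \<alpha> x \<bullet> refl \<alpha> y = x \<bullet> y"
  unfolding refl_def by (simp add: inner_diff_left inner_diff_right algebra_simps inner_commute)

lemma refl_neg: "refl (-\<alpha>) = refl \<alpha>"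
  unfolding refl_def by auto

definition orth :: "('a::euclidean_space \<Rightarrow> 'a) \<Rightarrow> bool" where
  "orth f \<longleftrightarrow> linear f \<and> (\<forall>x y. f x \<bullet> f y = x \<bullet> y)"

lemma orth_conj: assumes "orth f" shows "f \<circ> refl \<alpha> = refl (f \<alpha>) \<circ> f"
proof
  fix x
  have l: "linear f" and i: "\<And>x y. f x \<bullet> f y = x \<bullet> y" using assms by (auto simp: orth_def)
  show "(f \<circ> refl \<alpha>) x = (refl (f \<alpha>) \<circ> f) x"
    unfolding refl_def o_def using l i by (simp add: linear_diff linear_scale)
qed

lemma sum_delta_scale: "finite A \<Longrightarrow> d \<in> A \<Longrightarrow> (\<Sum>x\<in>A. (if x = d then k else 0) *\<^sub>R x) = k *\<^sub>R (d::'a::real_vector)"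
proof -
  assume "finite A" "d \<in> A"
  have "(\<Sum>x\<in>A. (if x = d then k else 0) *\<^sub>R x) = (\<Sum>x\<in>A. if x = d then k *\<^sub>R x else 0)"
    by (rule sum.cong) auto
  thus ?thesis using \<open>finite A\<close> \<open>d \<in> A\<close> by (simp add: sum.delta)
qed

locale RS =
  fixes \<Phi> \<Delta> :: "'a::euclidean_space set"
  assumes rs: "root_system \<Phi>" and base: "is_base \<Phi> \<Delta>"
begin

abbreviation "P \<equiv> pos_roots \<Phi> \<Delta>"
abbreviation "NP \<equiv> neg_roots \<Phi> \<Delta>"

lemma finPhi: "finite \<Phi>" and zero: "0 \<notin> \<Phi>"
  and reflc: "\<alpha> \<in> \<Phi> \<Longrightarrow> \<beta> \<in> \<Phi> \<Longrightarrow> refl \<alpha> \<beta> \<in> \<Phi>"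
  and reduced: "\<alpha> \<in> \<Phi> \<Longrightarrow> c *\<^sub>R \<alpha> \<in> \<Phi> \<Longrightarrow> c = 1 \<or> c = -1"
  and cryst: "\<alpha> \<in> \<Phi> \<Longrightarrow> \<beta> \<in> \<Phi> \<Longrightarrow> 2 * (\<beta> \<bullet> \<alpha>) / (\<alpha> \<bullet> \<alpha>) \<in> \<int>"
  using rs unfolding root_system_def by auto

lemma DsubPhi: "\<Delta> \<subseteq> \<Phi>" and indep: "independent \<Delta>"
  and rep: "\<beta> \<in> \<Phi> \<Longrightarrow> \<exists>c. (\<forall>\<delta>\<in>\<Delta>. c \<delta> \<in> \<int>) \<and> \<beta> = (\<Sum>\<delta>\<in>\<Delta>. c \<delta> *\<^sub>R \<delta>) \<and>
        ((\<forall>\<delta>\<in>\<Delta>. c \<delta> \<ge> 0) \<or> (\<forall>\<delta>\<in>\<Delta>. c \<delta> \<le> 0))"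
  using base unfolding is_base_def by auto

lemma finD: "finite \<Delta>" using indep independent_bound by auto

lemma uniq:
  assumes "(\<Sum>\<delta>\<in>\<Delta>. a \<delta> *\<^sub>R \<delta>) = (\<Sum>\<delta>\<in>\<Delta>. b \<delta> *\<^sub>R \<delta>)" "d \<in> \<Delta>"
  shows "a d = b d"
proof (rule ccontr)
  assume ne: "a d \<noteq> b d"
  have "(\<Sum>\<delta>\<in>\<Delta>. (a \<delta> - b \<delta>) *\<^sub>R \<delta>) = 0"
    using assms(1) by (simp add: scaleR_diff_left sum_subtractf)
  hence "dependent \<Delta>" using dependent_finite[OF finD] ne assms(2)
    by (intro iffD2[OF dependent_finite[OF finD]]) (auto intro!: exI[of _ "\<lambda>\<delta>. a \<delta> - b \<delta>"])
  thus False using indep by simp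
qed

lemma PsubPhi: "P \<subseteq> \<Phi>" unfolding pos_roots_def by auto
lemma finP: "finite P" using PsubPhi finPhi finite_subset by auto

lemma NP_iff: "y \<in> NP \<longleftrightarrow> - y \<in> P"
proof
  assume "y \<in> NP" thus "- y \<in> P" unfolding neg_roots_def by auto
next
  assume "- y \<in> P" thus "y \<in> NP" unfolding neg_roots_def using image_eqI[of y uminus "- y" P] by simp
qed

lemma Phi_neg: "\<alpha> \<in> \<Phi> \<Longrightarrow> - \<alpha> \<in> \<Phi>"
proof -
  assume a: "\<alpha> \<in> \<Phi>"
  hence "\<alpha> \<noteq> 0" using zero by auto
  thus ?thesis using reflc[OF a a] refl_self[of \<alpha>] by simp
qed

lemma posE:
  assumes "\<beta> \<in> P"
  obtains c where "\<forall>\<delta>\<in>\<Delta>. c \<delta> \<in> \<int> \<and> c \<delta> \<ge> 0" "\<beta> = (\<Sum>\<delta>\<in>\<Delta>. c \<delta> *\<^sub>R \<delta>)"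
  using assms unfolding pos_roots_def by auto

lemma dich: "\<alpha> \<in> \<Phi> \<Longrightarrow> \<alpha> \<in> P \<or> \<alpha> \<in> NP"
proof -
  assume a: "\<alpha> \<in> \<Phi>"
  obtain c where c: "\<forall>\<delta>\<in>\<Delta>. c \<delta> \<in> \<int>" "\<alpha> = (\<Sum>\<delta>\<in>\<Delta>. c \<delta> *\<^sub>R \<delta>)"
    "(\<forall>\<delta>\<in>\<Delta>. c \<delta> \<ge> 0) \<or> (\<forall>\<delta>\<in>\<Delta>. c \<delta> \<le> 0)" using rep[OF a] by blast
  show ?thesis
  proof (cases "\<forall>\<delta>\<in>\<Delta>. c \<delta> \<ge> 0")
    case True thus ?thesis using c a unfolding pos_roots_def by auto
  next
    case False
    hence "\<forall>\<delta>\<in>\<Delta>. - c \<delta> \<ge> 0" using c by auto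
    moreover have "- \<alpha> = (\<Sum>\<delta>\<in>\<Delta>. (- c \<delta>) *\<^sub>R \<delta>)" using c by (simp add: sum_negf)
    ultimately have "- \<alpha> \<in> P" using c Phi_neg[OF a] unfolding pos_roots_def
      by (auto intro!: exI[of _ "\<lambda>\<delta>. - c \<delta>"])
    thus ?thesis using NP_iff by auto
  qed
qed

lemma disj: "\<alpha> \<in> P \<Longrightarrow> \<alpha> \<notin> NP"
proof
  assume a: "\<alpha> \<in> P" "\<alpha> \<in> NP"
  hence b: "- \<alpha> \<in> P" using NP_iff by auto
  obtain c where c: "\<forall>\<delta>\<in>\<Delta>. c \<delta> \<in> \<int> \<and> c \<delta> \<ge> 0" "\<alpha> = (\<Sum>\<delta>\<in>\<Delta>. c \<delta> *\<^sub>R \<delta>)"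
    using posE[OF a(1)] by blast
  obtain d where d: "\<forall>\<delta>\<in>\<Delta>. d \<delta> \<in> \<int> \<and> d \<delta> \<ge> 0" "- \<alpha> = (\<Sum>\<delta>\<in>\<Delta>. d \<delta> *\<^sub>R \<delta>)"
    using posE[OF b] by blast
  have "(\<Sum>\<delta>\<in>\<Delta>. (c \<delta> + d \<delta>) *\<^sub>R \<delta>) = \<alpha> + (- \<alpha>)"
    using c d by (simp add: scaleR_add_left sum.distrib)
  hence "(\<Sum>\<delta>\<in>\<Delta>. (c \<delta> + d \<delta>) *\<^sub>R \<delta>) = (\<Sum>\<delta>\<in>\<Delta>. 0 *\<^sub>R \<delta>)" by simp
  hence "\<forall>\<delta>\<in>\<Delta>. c \<delta> + d \<delta> = 0" using uniq[of "\<lambda>x. c x + d x" "\<lambda>x. 0"] by blast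
  hence "\<forall>\<delta>\<in>\<Delta>. c \<delta> = 0" using c d by (metis add_nonneg_eq_0_iff)
  hence "\<alpha> = 0" using c by simp
  thus False using a PsubPhi zero by auto
qed

lemma DsubP: "\<Delta> \<subseteq> P"
proof
  fix \<delta> assume d: "\<delta> \<in> \<Delta>"
  have "\<delta> = (\<Sum>x\<in>\<Delta>. (if x = \<delta> then 1 else 0) *\<^sub>R x)"
    using d finD by (simp add: sum_delta_scale)
  thus "\<delta> \<in> P" using d DsubPhi unfolding pos_roots_def
    by (auto intro!: exI[of _ "\<lambda>x. if x = \<delta> then 1 else 0"])
qed

lemma nonzeroD: "\<delta> \<in> \<Delta> \<Longrightarrow> \<delta> \<noteq> 0" using DsubPhi zero by auto
lemma nonzeroPhi: "\<delta> \<in> \<Phi> \<Longrightarrow> \<delta> \<noteq> 0" using zero by auto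

lemma R3:
  assumes d: "\<delta> \<in> \<Delta>" and b: "\<beta> \<in> P" and ne: "\<beta> \<noteq> \<delta>"
  shows "refl \<delta> \<beta> \<in> P"
proof (rule ccontr)
  assume "refl \<delta> \<beta> \<notin> P"
  moreover have ph: "refl \<delta> \<beta> \<in> \<Phi>" using reflc d b DsubPhi PsubPhi by auto
  ultimately have "- refl \<delta> \<beta> \<in> P" using dich NP_iff by blast
  then obtain c' where c': "\<forall>x\<in>\<Delta>. c' x \<in> \<int> \<and> c' x \<ge> 0" "- refl \<delta> \<beta> = (\<Sum>x\<in>\<Delta>. c' x *\<^sub>R x)"
    using posE by blast
  obtain c where c: "\<forall>x\<in>\<Delta>. c x \<in> \<int> \<and> c x \<ge> 0" "\<beta> = (\<Sum>x\<in>\<Delta>. c x *\<^sub>R x)"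
    using posE[OF b] by blast
  define k where "k = 2 * (\<beta> \<bullet> \<delta>) / (\<delta> \<bullet> \<delta>)"
  have rf: "refl \<delta> \<beta> = \<beta> - k *\<^sub>R \<delta>" unfolding refl_def k_def by simp
  have kd: "k *\<^sub>R \<delta> = (\<Sum>x\<in>\<Delta>. (if x = \<delta> then k else 0) *\<^sub>R x)"
    using d finD by (simp add: sum_delta_scale)
  have "(\<Sum>x\<in>\<Delta>. (c x + c' x) *\<^sub>R x) = \<beta> - refl \<delta> \<beta>"
    using c c' by (simp add: scaleR_add_left sum.distrib)
  also have "\<dots> = (\<Sum>x\<in>\<Delta>. (if x = \<delta> then k else 0) *\<^sub>R x)" using rf kd by simp
  finally have e: "\<forall>x\<in>\<Delta>. c x + c' x = (if x = \<delta> then k else 0)"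
    using uniq[of "\<lambda>x. c x + c' x" "\<lambda>x. if x = \<delta> then k else 0"] by blast
  have "\<forall>x\<in>\<Delta>. x \<noteq> \<delta> \<longrightarrow> c x = 0" using e c c' by (metis add_nonneg_eq_0_iff)
  hence "\<beta> = (\<Sum>x\<in>\<Delta>. (if x = \<delta> then c \<delta> else 0) *\<^sub>R x)"
    using c(2) by (auto intro!: sum.cong)
  also have "\<dots> = c \<delta> *\<^sub>R \<delta>" using d finD by (simp add: sum_delta_scale)
  finally have bb: "\<beta> = c \<delta> *\<^sub>R \<delta>" .
  have "c \<delta> = 1 \<or> c \<delta> = -1" using reduced[of \<delta> "c \<delta>"] bb b PsubPhi d DsubPhi by auto
  moreover have "c \<delta> \<ge> 0" using c d by auto
  ultimately have "\<beta> = \<delta>" using bb by auto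
  thus False using ne by simp
qed

lemma weyl_comp: "u \<in> weyl \<Phi> \<Longrightarrow> w \<in> weyl \<Phi> \<Longrightarrow> u \<circ> w \<in> weyl \<Phi>"
  by (induction u rule: weyl.induct) (auto simp: comp_assoc intro: weyl.intros)

lemma refl_weyl: "\<alpha> \<in> \<Phi> \<Longrightarrow> refl \<alpha> \<in> weyl \<Phi>"
  using weyl_step[OF weyl_id, of \<alpha>] by simp

lemma weyl_orth: "u \<in> weyl \<Phi> \<Longrightarrow> orth u"
proof (induction u rule: weyl.induct)
  case weyl_id thus ?case using bounded_linear.linear[OF bounded_linear_ident] by (auto simp: orth_def)
next
  case (weyl_step w \<alpha>)
  have "linear (refl \<alpha> \<circ> w)" using weyl_step refl_linear[of \<alpha>]
    by (intro linear_compose) (auto simp: orth_def)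
  moreover have "\<forall>x y. (refl \<alpha> \<circ> w) x \<bullet> (refl \<alpha> \<circ> w) y = x \<bullet> y"
    using weyl_step refl_inner[of \<alpha>] nonzeroPhi[of \<alpha>] by (simp add: orth_def)
  ultimately show ?case unfolding orth_def by blast
qed

lemma weyl_linear: "u \<in> weyl \<Phi> \<Longrightarrow> linear u" using weyl_orth orth_def by auto

lemma weyl_maps: "u \<in> weyl \<Phi> \<Longrightarrow> \<alpha> \<in> \<Phi> \<Longrightarrow> u \<alpha> \<in> \<Phi>"
  by (induction u rule: weyl.induct) (auto intro: reflc)

lemma weyl_inverse: "u \<in> weyl \<Phi> \<Longrightarrow> \<exists>u'\<in>weyl \<Phi>. u' \<circ> u = id \<and> u \<circ> u' = id"
proof (induction u rule: weyl.induct)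
  case weyl_id show ?case using weyl.weyl_id by (intro bexI[of _ id]) auto
next
  case (weyl_step w \<alpha>)
  then obtain u' where u': "u' \<in> weyl \<Phi>" "u' \<circ> w = id" "w \<circ> u' = id" by blast
  have nz: "\<alpha> \<noteq> 0" using weyl_step nonzeroPhi by auto
  show ?case
  proof (intro bexI conjI)
    show "u' \<circ> refl \<alpha> \<in> weyl \<Phi>" using weyl_comp[OF u'(1) refl_weyl] weyl_step by auto
    have "u' \<circ> refl \<alpha> \<circ> (refl \<alpha> \<circ> w) = u' \<circ> (refl \<alpha> \<circ> (refl \<alpha> \<circ> w))" by (simp add: comp_assoc)
    also have "\<dots> = u' \<circ> w" by (simp only: refl_comp_self2[OF nz])
    finally show "u' \<circ> refl \<alpha> \<circ> (refl \<alpha> \<circ> w) = id" using u' by simp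
    have "refl \<alpha> \<circ> w \<circ> (u' \<circ> refl \<alpha>) = refl \<alpha> \<circ> (w \<circ> u') \<circ> refl \<alpha>" by (simp add: comp_assoc)
    also have "\<dots> = id" using u'(3) refl_comp_self[OF nz] by simp
    finally show "refl \<alpha> \<circ> w \<circ> (u' \<circ> refl \<alpha>) = id" .
  qed
qed

lemma weyl_bij: "u \<in> weyl \<Phi> \<Longrightarrow> bij u"
  using weyl_inverse o_bij by blast

lemma weyl_inv: "u \<in> weyl \<Phi> \<Longrightarrow> inv u \<in> weyl \<Phi>"
proof -
  assume u: "u \<in> weyl \<Phi>"
  then obtain u' where "u' \<in> weyl \<Phi>" "u' \<circ> u = id" "u \<circ> u' = id" using weyl_inverse by blast
  moreover hence "inv u = u'" using inv_unique_comp by blast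
  ultimately show ?thesis by simp
qed

end


definition Ww :: "'a::euclidean_space list \<Rightarrow> 'a \<Rightarrow> 'a" where
  "Ww as = foldr (\<lambda>\<alpha> f. refl \<alpha> \<circ> f) as id"

lemma Ww_Nil[simp]: "Ww [] = id" by (simp add: Ww_def)
lemma Ww_Cons[simp]: "Ww (a # as) = refl a \<circ> Ww as" by (simp add: Ww_def)
lemma Ww_append: "Ww (as @ bs) = Ww as \<circ> Ww bs"
  by (induction as) (auto simp: comp_assoc)
lemma Ww_snoc: "Ww (as @ [a]) = Ww as \<circ> refl a"
  by (simp add: Ww_append)

context RS begin

lemma Ww_weyl: "set as \<subseteq> \<Phi> \<Longrightarrow> Ww as \<in> weyl \<Phi>"
  by (induction as) (auto intro: weyl.intros)

lemma Ww_rev: "set as \<subseteq> \<Phi> \<Longrightarrow> Ww as \<circ> Ww (rev as) = id"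
proof (induction as)
  case Nil thus ?case by simp
next
  case (Cons a as)
  have nz: "a \<noteq> 0" using Cons nonzeroPhi by auto
  have "Ww (a # as) \<circ> Ww (rev (a # as)) = refl a \<circ> (Ww as \<circ> Ww (rev as)) \<circ> refl a"
    by (simp add: Ww_append comp_assoc)
  also have "\<dots> = id"
  proof -
    have "set as \<subseteq> \<Phi>" using Cons.prems by simp
    hence "Ww as \<circ> Ww (rev as) = id" by (rule Cons.IH)
    thus ?thesis by (simp only: comp_id refl_comp_self[OF nz])
  qed
  finally show ?case .
qed

lemma Ww_rev2: "set as \<subseteq> \<Phi> \<Longrightarrow> Ww (rev as) \<circ> Ww as = id"
  using Ww_rev[of "rev as"] by simp

lemma Ww_inv: "set as \<subseteq> \<Phi> \<Longrightarrow> inv (Ww as) = Ww (rev as)"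
  using Ww_rev Ww_rev2 inv_unique_comp by blast

lemma neg_notP: "\<beta> \<in> P \<Longrightarrow> - \<beta> \<notin> P"
  using disj NP_iff by auto

definition nn :: "('a \<Rightarrow> 'a) \<Rightarrow> nat" where
  "nn x = card {\<beta>\<in>P. x \<beta> \<in> NP}"

lemma nn_id: "nn id = 0"
proof -
  have e: "{\<beta>\<in>P. id \<beta> \<in> NP} = {}" using disj by auto
  show ?thesis unfolding nn_def e by simp
qed

lemma nn_id': "nn (\<lambda>x. x) = 0" using nn_id unfolding id_def .

lemma nn_step:
  assumes d: "\<delta> \<in> \<Delta>" and x: "x \<in> weyl \<Phi>"
  shows "(x \<delta> \<in> P \<longrightarrow> nn (x \<circ> refl \<delta>) = nn x + 1) \<and> (x \<delta> \<in> NP \<longrightarrow> nn (x \<circ> refl \<delta>) + 1 = nn x)"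
proof -
  define A where "A = {\<beta>\<in>P. x \<beta> \<in> NP}"
  define B where "B = {\<beta>\<in>P. x (refl \<delta> \<beta>) \<in> NP}"
  have nz: "\<delta> \<noteq> 0" using nonzeroD d by auto
  have dP: "\<delta> \<in> P" using d DsubP by auto
  have fA: "finite A" and fB: "finite B" unfolding A_def B_def using finP by auto
  have ne: "refl \<delta> \<gamma> \<noteq> \<delta>" if "\<gamma> \<in> P" for \<gamma>
  proof
    assume "refl \<delta> \<gamma> = \<delta>"
    hence "\<gamma> = - \<delta>" using refl_invol[OF nz, of \<gamma>] refl_self[OF nz] by metis
    thus False using that neg_notP[OF dP] by simp
  qed
  have eq: "B - {\<delta>} = refl \<delta> ` (A - {\<delta>})"
  proof
    show "B - {\<delta>} \<subseteq> refl \<delta> ` (A - {\<delta>})"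
    proof
      fix \<beta> assume b: "\<beta> \<in> B - {\<delta>}"
      hence "refl \<delta> \<beta> \<in> A - {\<delta>}" unfolding A_def B_def using R3[OF d] ne by auto
      moreover have "\<beta> = refl \<delta> (refl \<delta> \<beta>)" using refl_invol[OF nz] by simp
      ultimately show "\<beta> \<in> refl \<delta> ` (A - {\<delta>})" by blast
    qed
  next
    show "refl \<delta> ` (A - {\<delta>}) \<subseteq> B - {\<delta>}"
      unfolding A_def B_def using R3[OF d] ne refl_invol[OF nz] by auto
  qed
  have inj: "inj_on (refl \<delta>) S" for S using refl_invol[OF nz] by (metis inj_onI)
  have cd: "card (B - {\<delta>}) = card (A - {\<delta>})" using eq card_image[OF inj] by simp
  have lin: "linear x" using weyl_linear x by auto
  have xneg: "x (refl \<delta> \<delta>) = - x \<delta>" using refl_self[OF nz] linear_neg[OF lin] by simp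
  have dB: "\<delta> \<in> B \<longleftrightarrow> x \<delta> \<in> P" unfolding B_def using dP xneg NP_iff by simp
  have dA: "\<delta> \<in> A \<longleftrightarrow> x \<delta> \<in> NP" unfolding A_def using dP by simp
  have cA: "card (A - {\<delta>}) = (if \<delta> \<in> A then card A - 1 else card A)" using card_Diff_singleton_if[of A] by simp
  have cB: "card (B - {\<delta>}) = (if \<delta> \<in> B then card B - 1 else card B)" using card_Diff_singleton_if[of B] by simp
  have pA: "\<delta> \<in> A \<Longrightarrow> card A > 0" using fA card_gt_0_iff by blast
  have pB: "\<delta> \<in> B \<Longrightarrow> card B > 0" using fB card_gt_0_iff by blast
  have nnA: "nn x = card A" unfolding nn_def A_def by simp
  have nnB: "nn (x \<circ> refl \<delta>) = card B" unfolding nn_def B_def by simp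
  show ?thesis
  proof (intro conjI impI)
    assume "x \<delta> \<in> P"
    hence "\<delta> \<in> B" "\<delta> \<notin> A" using dB dA disj by auto
    thus "nn (x \<circ> refl \<delta>) = nn x + 1" using cA cB cd pB nnA nnB by simp
  next
    assume "x \<delta> \<in> NP"
    hence "\<delta> \<notin> B" "\<delta> \<in> A" using dB dA disj by auto
    thus "nn (x \<circ> refl \<delta>) + 1 = nn x" using cA cB cd pA nnA nnB by simp
  qed
qed

lemma exchange:
  assumes as: "set as \<subseteq> \<Delta>" and a: "\<alpha> \<in> P" and neg: "Ww as \<alpha> \<in> NP"
  shows "\<exists>cs. set cs \<subseteq> \<Delta> \<and> length cs + 1 = length as \<and> Ww as \<circ> refl \<alpha> = Ww cs"
proof -
  define b where "b i = Ww (drop i as) \<alpha>" for i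
  have ex: "b (length as) \<in> P" unfolding b_def using a by simp
  define j where "j = (LEAST i. b i \<in> P)"
  have bj: "b j \<in> P" unfolding j_def using LeastI[of "\<lambda>i. b i \<in> P", OF ex] .
  have jle: "j \<le> length as" unfolding j_def using Least_le[of "\<lambda>i. b i \<in> P", OF ex] .
  have "b 0 \<notin> P" unfolding b_def using neg disj by auto
  hence j0: "j \<noteq> 0" using bj by (metis)
  define i where "i = j - 1"
  have ij: "j = Suc i" using j0 i_def by simp
  have il: "i < length as" using jle ij by simp
  have bi: "b i \<notin> P" using not_less_Least[of i "\<lambda>i. b i \<in> P"] ij unfolding j_def by simp
  define a' where "a' = as ! i"
  have a'D: "a' \<in> \<Delta>" using as il a'_def nth_mem by blast
  have nz: "a' \<noteq> 0" using a'D nonzeroD by auto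
  have dropi: "drop i as = a' # drop j as" using il ij a'_def by (simp add: Cons_nth_drop_Suc)
  have bib: "b i = refl a' (b j)" unfolding b_def using dropi by simp
  have bja: "b j = a'"
  proof (rule ccontr)
    assume "b j \<noteq> a'"
    hence "refl a' (b j) \<in> P" using R3[OF a'D bj] by simp
    thus False using bi bib by simp
  qed
  define y where "y = Ww (drop j as)"
  have yw: "y \<in> weyl \<Phi>" unfolding y_def using Ww_weyl as DsubPhi set_drop_subset by (meson subset_trans)
  have ya: "y \<alpha> = a'" using bja unfolding b_def y_def by simp
  have conj: "y \<circ> refl \<alpha> = refl a' \<circ> y" using orth_conj[OF weyl_orth[OF yw]] ya by simp
  have "Ww as = Ww (take i as) \<circ> Ww (drop i as)" using Ww_append[of "take i as" "drop i as"] by simp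
  also have "\<dots> = Ww (take i as) \<circ> (refl a' \<circ> y)" using dropi y_def by simp
  finally have "Ww as \<circ> refl \<alpha> = Ww (take i as) \<circ> (refl a' \<circ> (y \<circ> refl \<alpha>))" by (simp add: comp_assoc)
  also have "\<dots> = Ww (take i as) \<circ> (refl a' \<circ> (refl a' \<circ> y))" using conj by simp
  also have "\<dots> = Ww (take i as) \<circ> y" by (simp add: refl_comp_self2[OF nz])
  also have "\<dots> = Ww (take i as @ drop j as)" unfolding y_def by (simp add: Ww_append)
  finally have e: "Ww as \<circ> refl \<alpha> = Ww (take i as @ drop j as)" .
  show ?thesis
  proof (intro exI conjI)
    show "set (take i as @ drop j as) \<subseteq> \<Delta>" using as set_take_subset set_drop_subset by fastforce
    show "length (take i as @ drop j as) + 1 = length as" using il ij by simp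
  qed (rule e)
qed

definition minw :: "'a list \<Rightarrow> bool" where
  "minw as \<longleftrightarrow> set as \<subseteq> \<Delta> \<and> (\<forall>cs. set cs \<subseteq> \<Delta> \<longrightarrow> Ww cs = Ww as \<longrightarrow> length as \<le> length cs)"

lemma Ww_D_weyl: "set as \<subseteq> \<Delta> \<Longrightarrow> Ww as \<in> weyl \<Phi>"
  using Ww_weyl DsubPhi by auto

lemma nn_le: "set as \<subseteq> \<Delta> \<Longrightarrow> nn (Ww as) \<le> length as"
proof (induction as rule: rev_induct)
  case Nil thus ?case using nn_id nn_id' by simp
next
  case (snoc a as)
  have a: "a \<in> \<Delta>" and as: "set as \<subseteq> \<Delta>" using snoc by auto
  have w: "Ww as \<in> weyl \<Phi>" using Ww_D_weyl as by auto
  have "Ww as a \<in> \<Phi>" using weyl_maps[OF w] a DsubPhi by auto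
  hence "Ww as a \<in> P \<or> Ww as a \<in> NP" using dich by auto
  moreover have "nn (Ww (as @ [a])) = nn (Ww as \<circ> refl a)" by (simp add: Ww_snoc)
  ultimately show ?case using nn_step[OF a w] snoc.IH[OF as] by auto
qed

lemma nn_min: "minw as \<Longrightarrow> nn (Ww as) = length as"
proof (induction as rule: rev_induct)
  case Nil thus ?case using nn_id nn_id' by simp
next
  case (snoc a as)
  have a: "a \<in> \<Delta>" and as: "set as \<subseteq> \<Delta>" using snoc by (auto simp: minw_def)
  have m: "minw as" unfolding minw_def
  proof (intro conjI allI impI)
    fix cs assume cs: "set cs \<subseteq> \<Delta>" "Ww cs = Ww as"
    hence "Ww (cs @ [a]) = Ww (as @ [a])" by (simp add: Ww_snoc)
    moreover have "set (cs @ [a]) \<subseteq> \<Delta>" using cs a by auto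
    ultimately show "length as \<le> length cs" using snoc.prems unfolding minw_def by fastforce
  qed (rule as)
  have w: "Ww as \<in> weyl \<Phi>" using Ww_D_weyl as by auto
  have "Ww as a \<in> P"
  proof (rule ccontr)
    assume "Ww as a \<notin> P"
    hence "Ww as a \<in> NP" using dich weyl_maps[OF w] a DsubPhi by auto
    then obtain cs where cs: "set cs \<subseteq> \<Delta>" "length cs + 1 = length as" "Ww as \<circ> refl a = Ww cs"
      using exchange[OF as] a DsubP by blast
    hence "Ww cs = Ww (as @ [a])" by (simp add: Ww_snoc)
    hence "length (as @ [a]) \<le> length cs" using snoc.prems cs(1) unfolding minw_def by blast
    thus False using cs(2) by simp
  qed
  moreover have "nn (Ww (as @ [a])) = nn (Ww as \<circ> refl a)" by (simp add: Ww_snoc)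
  ultimately show ?case using nn_step[OF a w] snoc.IH[OF m] by simp
qed

end


context RS begin

lemma height_exists: "\<exists>h::'a \<Rightarrow> real. linear h \<and> (\<forall>x\<in>\<Delta>. h x = 1)"
  using linear_independent_extend[OF indep, of "\<lambda>_. 1"] by blast

lemma conj_simple:
  assumes b: "\<beta> \<in> P"
  shows "\<exists>as \<delta>. set as \<subseteq> \<Delta> \<and> \<delta> \<in> \<Delta> \<and> \<beta> = Ww as \<delta>"
proof -
  obtain h :: "'a \<Rightarrow> real" where hl: "linear h" and h1: "\<forall>x\<in>\<Delta>. h x = 1"
    using height_exists by blast
  have hP: "h \<beta> \<in> \<int> \<and> h \<beta> \<ge> 0" if bP: "\<beta> \<in> P" for \<beta>
  proof -
    obtain c where c: "\<forall>x\<in>\<Delta>. c x \<in> \<int> \<and> c x \<ge> 0" "\<beta> = (\<Sum>x\<in>\<Delta>. c x *\<^sub>R x)"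
      using posE[OF bP] by blast
    have "h \<beta> = (\<Sum>x\<in>\<Delta>. c x * h x)" using c(2) by (simp add: linear_sum[OF hl] linear_scale[OF hl])
    also have "\<dots> = (\<Sum>x\<in>\<Delta>. c x)" using h1 by simp
    finally show ?thesis using c(1) by (simp add: Ints_sum sum_nonneg)
  qed
  have main: "\<forall>\<beta>. \<beta> \<in> P \<longrightarrow> nat \<lfloor>h \<beta>\<rfloor> = n \<longrightarrow> (\<exists>as \<delta>. set as \<subseteq> \<Delta> \<and> \<delta> \<in> \<Delta> \<and> \<beta> = Ww as \<delta>)" for n
  proof (induction n rule: less_induct)
    case (less n)
    show ?case
    proof (intro allI impI)
      fix \<beta> assume b: "\<beta> \<in> P" and hn: "nat \<lfloor>h \<beta>\<rfloor> = n"
      show "\<exists>as \<delta>. set as \<subseteq> \<Delta> \<and> \<delta> \<in> \<Delta> \<and> \<beta> = Ww as \<delta>"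
      proof (cases "\<beta> \<in> \<Delta>")
        case True thus ?thesis by (intro exI[of _ "[]"] exI[of _ \<beta>]) simp
      next
        case False
        obtain c where c: "\<forall>x\<in>\<Delta>. c x \<in> \<int> \<and> c x \<ge> 0" "\<beta> = (\<Sum>x\<in>\<Delta>. c x *\<^sub>R x)"
          using posE[OF b] by blast
        have bPhi: "\<beta> \<in> \<Phi>" using b PsubPhi by auto
        have bnz: "\<beta> \<noteq> 0" using bPhi zero by auto
        have "\<beta> \<bullet> \<beta> = (\<Sum>x\<in>\<Delta>. c x * (x \<bullet> \<beta>))"
          by (subst (1) c(2)) (simp add: inner_sum_left)
        moreover have "\<beta> \<bullet> \<beta> > 0" using bnz by simp
        ultimately obtain \<delta> where d: "\<delta> \<in> \<Delta>" "\<delta> \<bullet> \<beta> > 0"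
        proof -
          assume r: "\<And>\<delta>. \<delta> \<in> \<Delta> \<Longrightarrow> 0 < \<delta> \<bullet> \<beta> \<Longrightarrow> thesis"
          assume e: "\<beta> \<bullet> \<beta> = (\<Sum>x\<in>\<Delta>. c x * (x \<bullet> \<beta>))" and p: "\<beta> \<bullet> \<beta> > 0"
          show thesis
          proof (rule ccontr)
            assume "\<not> thesis"
            hence "\<forall>x\<in>\<Delta>. x \<bullet> \<beta> \<le> 0" using r by force
            hence "(\<Sum>x\<in>\<Delta>. c x * (x \<bullet> \<beta>)) \<le> 0" using c(1)
              by (intro sum_nonpos) (simp add: mult_nonneg_nonpos)
            thus False using e p by simp
          qed
        qed
        have dPhi: "\<delta> \<in> \<Phi>" using d DsubPhi by auto
        have dnz: "\<delta> \<noteq> 0" using dPhi zero by auto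
        define k where "k = 2 * (\<beta> \<bullet> \<delta>) / (\<delta> \<bullet> \<delta>)"
        have kZ: "k \<in> \<int>" unfolding k_def using cryst[OF dPhi bPhi] .
        have kpos: "k > 0" unfolding k_def using d(2) dnz by (simp add: inner_commute)
        have rf: "refl \<delta> \<beta> = \<beta> - k *\<^sub>R \<delta>" unfolding refl_def k_def by simp
        have ne: "\<beta> \<noteq> \<delta>" using False d by auto
        have b'P: "refl \<delta> \<beta> \<in> P" using R3[OF d(1) b ne] .
        have hb': "h (refl \<delta> \<beta>) = h \<beta> - k" using rf h1 d by (simp add: linear_diff[OF hl] linear_scale[OF hl])
        obtain p where p: "h \<beta> = of_int p" using hP[OF b] Ints_cases by metis
        obtain q where q: "h (refl \<delta> \<beta>) = of_int q" using hP[OF b'P] Ints_cases by metis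
        obtain m where m: "k = of_int m" using kZ Ints_cases by metis
        have "q \<ge> 0" using hP[OF b'P] q by simp
        moreover have "m \<ge> 1" using kpos m by simp
        moreover have "q = p - m" using hb' p q m by simp
        ultimately have lt: "nat \<lfloor>h (refl \<delta> \<beta>)\<rfloor> < n" using hn p q by simp
        obtain as \<delta>' where ih: "set as \<subseteq> \<Delta>" "\<delta>' \<in> \<Delta>" "refl \<delta> \<beta> = Ww as \<delta>'"
          using less.IH[OF lt] b'P by blast
        have "\<beta> = refl \<delta> (refl \<delta> \<beta>)" using refl_invol[OF dnz] by simp
        also have "\<dots> = Ww (\<delta> # as) \<delta>'" using ih(3) by simp
        finally show ?thesis using ih d by (intro exI[of _ "\<delta> # as"] exI[of _ \<delta>']) auto
      qed
    qed
  qed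
  thus ?thesis using b by blast
qed

lemma refl_word:
  assumes a: "\<alpha> \<in> \<Phi>"
  shows "\<exists>cs. set cs \<subseteq> \<Delta> \<and> refl \<alpha> = Ww cs"
proof -
  obtain \<beta> where b: "\<beta> \<in> P" "refl \<alpha> = refl \<beta>"
  proof (cases "\<alpha> \<in> P")
    case True thus ?thesis using that by blast
  next
    case False
    hence "- \<alpha> \<in> P" using dich[OF a] NP_iff by auto
    thus ?thesis using that refl_neg[of \<alpha>] by metis
  qed
  obtain as \<delta> where w: "set as \<subseteq> \<Delta>" "\<delta> \<in> \<Delta>" "\<beta> = Ww as \<delta>" using conj_simple[OF b(1)] by blast
  define z where "z = Ww as"
  have zw: "z \<in> weyl \<Phi>" unfolding z_def using Ww_D_weyl w by auto
  have c: "z \<circ> refl \<delta> = refl \<beta> \<circ> z" using orth_conj[OF weyl_orth[OF zw]] w(3) z_def by simp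
  have asPhi: "set as \<subseteq> \<Phi>" using w DsubPhi by auto
  have "refl \<beta> = refl \<beta> \<circ> (z \<circ> Ww (rev as))" using Ww_rev[OF asPhi] z_def by simp
  also have "\<dots> = (z \<circ> refl \<delta>) \<circ> Ww (rev as)" using c by (simp add: comp_assoc)
  also have "\<dots> = Ww (as @ [\<delta>] @ rev as)" unfolding z_def by (simp add: Ww_append comp_assoc)
  finally show ?thesis using b w by (intro exI[of _ "as @ [\<delta>] @ rev as"]) auto
qed

lemma weyl_word: "u \<in> weyl \<Phi> \<Longrightarrow> \<exists>as. set as \<subseteq> \<Delta> \<and> u = Ww as"
proof (induction u rule: weyl.induct)
  case weyl_id show ?case by (intro exI[of _ "[]"]) simp
next
  case (weyl_step w \<alpha>)
  then obtain as cs where "set as \<subseteq> \<Delta>" "w = Ww as" "set cs \<subseteq> \<Delta>" "refl \<alpha> = Ww cs"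
    using refl_word by blast
  thus ?case by (intro exI[of _ "cs @ as"]) (simp add: Ww_append)
qed

lemma wlen_Ww: "wlen \<Delta> u = (LEAST n. \<exists>as. length as = n \<and> set as \<subseteq> \<Delta> \<and> u = Ww as)"
  unfolding wlen_def Ww_def by simp

lemma wlen_le: "set cs \<subseteq> \<Delta> \<Longrightarrow> wlen \<Delta> (Ww cs) \<le> length cs"
  unfolding wlen_Ww by (rule Least_le) blast

lemma wlen_min: assumes u: "u \<in> weyl \<Phi>"
  shows "\<exists>as. minw as \<and> u = Ww as \<and> length as = wlen \<Delta> u"
proof -
  let ?Q = "\<lambda>n. \<exists>as. length as = n \<and> set as \<subseteq> \<Delta> \<and> u = Ww as"
  have "\<exists>n. ?Q n" using weyl_word[OF u] by blast
  hence "?Q (LEAST n. ?Q n)" by (rule LeastI_ex)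
  then obtain as where as: "length as = wlen \<Delta> u" "set as \<subseteq> \<Delta>" "u = Ww as"
    unfolding wlen_Ww by blast
  have "minw as" unfolding minw_def
  proof (intro conjI allI impI)
    fix cs assume "set cs \<subseteq> \<Delta>" "Ww cs = Ww as"
    thus "length as \<le> length cs" using wlen_le[of cs] as by simp
  qed (rule as(2))
  thus ?thesis using as by blast
qed

lemma wlen_nn: "u \<in> weyl \<Phi> \<Longrightarrow> wlen \<Delta> u = nn u"
  using wlen_min nn_min by metis

lemma wlen_inv_le: assumes u: "u \<in> weyl \<Phi>" shows "wlen \<Delta> (inv u) \<le> wlen \<Delta> u"
proof -
  obtain as where as: "minw as" "u = Ww as" "length as = wlen \<Delta> u" using wlen_min[OF u] by blast
  have s: "set as \<subseteq> \<Delta>" using as minw_def by auto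
  hence "inv u = Ww (rev as)" using as Ww_inv DsubPhi by auto
  thus ?thesis using wlen_le[of "rev as"] s as by simp
qed

lemma wlen_inv: assumes u: "u \<in> weyl \<Phi>" shows "wlen \<Delta> (inv u) = wlen \<Delta> u"
proof -
  have "wlen \<Delta> (inv (inv u)) \<le> wlen \<Delta> (inv u)" using wlen_inv_le weyl_inv u by blast
  moreover have "inv (inv u) = u" using inv_inv_eq weyl_bij u by blast
  ultimately show ?thesis using wlen_inv_le[OF u] by simp
qed

lemma card_Nset: assumes u: "u \<in> weyl \<Phi>" shows "card (Nset \<Phi> \<Delta> u) = wlen \<Delta> u"
proof -
  have "card (Nset \<Phi> \<Delta> u) = nn (inv u)" unfolding Nset_def nn_def by simp
  also have "\<dots> = wlen \<Delta> (inv u)" using wlen_nn weyl_inv u by simp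
  finally show ?thesis using wlen_inv u by simp
qed

lemma SE: assumes z: "z \<in> weyl \<Phi>" and a: "\<alpha> \<in> P" and n: "z \<alpha> \<in> NP"
  shows "nn (z \<circ> refl \<alpha>) < nn z"
proof -
  obtain as where as: "minw as" "z = Ww as" "length as = wlen \<Delta> z" using wlen_min[OF z] by blast
  have s: "set as \<subseteq> \<Delta>" using as minw_def by auto
  obtain cs where cs: "set cs \<subseteq> \<Delta>" "length cs + 1 = length as" "Ww as \<circ> refl \<alpha> = Ww cs"
    using exchange[OF s a] n as by blast
  have "nn (z \<circ> refl \<alpha>) \<le> length cs" using nn_le[OF cs(1)] cs(3) as by simp
  moreover have "nn z = length as" using nn_min as by simp
  ultimately show ?thesis using cs(2) by simp
qed

lemma refl_bij: assumes "\<alpha> \<noteq> 0" shows "bij (refl \<alpha>)" and "inv (refl \<alpha>) = refl \<alpha>"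
  using o_bij[OF refl_comp_self[OF assms] refl_comp_self[OF assms]]
    inv_unique_comp[OF refl_comp_self[OF assms] refl_comp_self[OF assms]] by auto

lemma edge_mono:
  assumes e: "(x, v) \<in> bruhat_edges \<Phi> \<Delta>"
  shows "x \<in> weyl \<Phi> \<and> v \<in> weyl \<Phi> \<and> wlen \<Delta> x < wlen \<Delta> v"
proof -
  obtain \<alpha> where v: "v = refl \<alpha> \<circ> x" and x: "x \<in> weyl \<Phi>" and a: "\<alpha> \<in> P"
    and c: "inv (refl \<alpha> \<circ> x) \<alpha> \<in> NP"
    using e unfolding bruhat_edges_def by blast
  have aPhi: "\<alpha> \<in> \<Phi>" using a PsubPhi by auto
  have nz: "\<alpha> \<noteq> 0" using aPhi zero by auto
  have vw: "v \<in> weyl \<Phi>" using v x aPhi by (simp add: weyl.weyl_step)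
  define y where "y = inv x"
  have yw: "y \<in> weyl \<Phi>" using weyl_inv x y_def by simp
  have invv: "inv v = y \<circ> refl \<alpha>"
    using o_inv_distrib[OF refl_bij(1)[OF nz] weyl_bij[OF x]] refl_bij(2)[OF nz] v y_def by simp
  have ylin: "linear y" using weyl_linear yw by simp
  have yneg: "y (- \<alpha>) = - y \<alpha>" using linear_neg[OF ylin] .
  have "y (refl \<alpha> \<alpha>) \<in> NP" using c invv v by simp
  hence "- y \<alpha> \<in> NP" using refl_self[OF nz] yneg by simp
  hence yaP: "y \<alpha> \<in> P" using NP_iff by simp
  define z where "z = y \<circ> refl \<alpha>"
  have zw: "z \<in> weyl \<Phi>" unfolding z_def using weyl_comp[OF yw refl_weyl[OF aPhi]] .
  have "z \<alpha> = - y \<alpha>" unfolding z_def using refl_self[OF nz] yneg by simp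
  hence zn: "z \<alpha> \<in> NP" using yaP NP_iff by simp
  have zz: "z \<circ> refl \<alpha> = y" unfolding z_def by (simp add: comp_assoc refl_comp_self[OF nz])
  have "nn y < nn z" using SE[OF zw a zn] zz by simp
  moreover have "wlen \<Delta> x = nn y" using wlen_inv[OF x] wlen_nn[OF yw] y_def by simp
  moreover have "wlen \<Delta> v = nn z" using wlen_inv[OF vw] wlen_nn[OF zw] invv z_def by simp
  ultimately show ?thesis using x vw by simp
qed

lemma trancl_mono:
  "(w, v) \<in> (bruhat_edges \<Phi> \<Delta>)\<^sup>+ \<Longrightarrow> w \<in> weyl \<Phi> \<and> v \<in> weyl \<Phi> \<and> wlen \<Delta> w < wlen \<Delta> v"
proof (induction rule: trancl_induct)
  case (base y) thus ?case using edge_mono by blast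
next
  case (step y z) thus ?case using edge_mono[of y z] by auto
qed

lemma trancl_cases:
  assumes "(w, v) \<in> (bruhat_edges \<Phi> \<Delta>)\<^sup>+"
  shows "(w, v) \<in> bruhat_edges \<Phi> \<Delta> \<or> wlen \<Delta> w + 2 \<le> wlen \<Delta> v"
  using assms
proof (cases rule: tranclE)
  case (step c)
  thus ?thesis using trancl_mono[of w c] edge_mono[of c v] by auto
qed simp

lemma Ngam_eq: assumes u: "u \<in> weyl \<Phi>"
  shows "Ngam \<Phi> \<Delta> \<gamma> u = Nset \<Phi> \<Delta> u - {u (- \<gamma>)}"
    and "(\<exists>\<beta>\<in>Nset \<Phi> \<Delta> u. inv u \<beta> = - \<gamma>) \<longleftrightarrow> u (- \<gamma>) \<in> Nset \<Phi> \<Delta> u"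
proof -
  have b: "bij u" using weyl_bij u by simp
  have iff: "inv u \<beta> = - \<gamma> \<longleftrightarrow> \<beta> = u (- \<gamma>)" for \<beta>
    using b by (metis bij_inv_eq_iff)
  have im: "y \<in> uminus ` (P - {\<gamma>}) \<longleftrightarrow> y \<in> NP \<and> y \<noteq> - \<gamma>" for y
  proof
    assume "y \<in> uminus ` (P - {\<gamma>})" thus "y \<in> NP \<and> y \<noteq> - \<gamma>" using NP_iff by auto
  next
    assume "y \<in> NP \<and> y \<noteq> - \<gamma>"
    hence "- y \<in> P - {\<gamma>}" using NP_iff by auto
    thus "y \<in> uminus ` (P - {\<gamma>})" using image_eqI[of y uminus "- y"] by simp
  qed
  show "Ngam \<Phi> \<Delta> \<gamma> u = Nset \<Phi> \<Delta> u - {u (- \<gamma>)}"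
    unfolding Ngam_def Nset_def using im iff by auto
  show "(\<exists>\<beta>\<in>Nset \<Phi> \<Delta> u. inv u \<beta> = - \<gamma>) \<longleftrightarrow> u (- \<gamma>) \<in> Nset \<Phi> \<Delta> u"
    using iff by auto
qed

end

theorem lemma3p1:
  fixes \<Phi> \<Delta> :: "'a::euclidean_space set" and \<gamma> :: 'a and v w :: "'a \<Rightarrow> 'a"
  assumes "root_system \<Phi>" and "is_base \<Phi> \<Delta>" and "irreducible_rs \<Phi>"
    and "\<gamma> \<in> pos_roots \<Phi> \<Delta>" and "\<forall>\<alpha>\<in>\<Phi>. prec \<Phi> \<Delta> \<alpha> \<gamma>"
    and "v \<in> weyl \<Phi>" and "w \<in> weyl \<Phi>"
    and "bruhat_less \<Phi> \<Delta> w v"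
  shows "len_gam \<Phi> \<Delta> \<gamma> w = len_gam \<Phi> \<Delta> \<gamma> v \<longleftrightarrow>
    (is_cover \<Phi> \<Delta> v w \<and> Nset \<Phi> \<Delta> w = Ngam \<Phi> \<Delta> \<gamma> w
     \<and> (\<exists>\<beta>\<in>Nset \<Phi> \<Delta> v. inv v \<beta> = - \<gamma>))"
proof -
  interpret RS \<Phi> \<Delta> using assms(1,2) by unfold_locales
  have vw: "v \<in> weyl \<Phi>" and ww: "w \<in> weyl \<Phi>" using assms by auto
  have tr: "(w, v) \<in> (bruhat_edges \<Phi> \<Delta>)\<^sup>+" using assms(8) unfolding bruhat_less_def .
  define a where "a = wlen \<Delta> w"
  define b where "b = wlen \<Delta> v"
  have ab: "a < b" using trancl_mono[OF tr] a_def b_def by simp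
  have cs: "(w, v) \<in> bruhat_edges \<Phi> \<Delta> \<or> a + 2 \<le> b" using trancl_cases[OF tr] a_def b_def by simp
  have cw: "card (Nset \<Phi> \<Delta> w) = a" using card_Nset[OF ww] a_def by simp
  have cv: "card (Nset \<Phi> \<Delta> v) = b" using card_Nset[OF vw] b_def by simp
  define ew where "ew = (w (- \<gamma>) \<in> Nset \<Phi> \<Delta> w)"
  define ev where "ev = (v (- \<gamma>) \<in> Nset \<Phi> \<Delta> v)"
  have finN: "finite (Nset \<Phi> \<Delta> u)" for u unfolding Nset_def using finP by auto
  have lgw: "len_gam \<Phi> \<Delta> \<gamma> w = (if ew then a - 1 else a)"
    unfolding len_gam_def Ngam_eq(1)[OF ww] ew_def using card_Diff_singleton_if cw by metis
  have lgv: "len_gam \<Phi> \<Delta> \<gamma> v = (if ev then b - 1 else b)"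
    unfolding len_gam_def Ngam_eq(1)[OF vw] ev_def using card_Diff_singleton_if cv by metis
  have aw: "ew \<Longrightarrow> a \<ge> 1" using cw finN[of w] ew_def card_gt_0_iff
    by (metis One_nat_def Suc_leI empty_iff)
  have ex_v: "(\<exists>\<beta>\<in>Nset \<Phi> \<Delta> v. inv v \<beta> = - \<gamma>) \<longleftrightarrow> ev" using Ngam_eq(2)[OF vw] ev_def by simp
  have eqw: "Nset \<Phi> \<Delta> w = Ngam \<Phi> \<Delta> \<gamma> w \<longleftrightarrow> \<not> ew" using Ngam_eq(1)[OF ww] ew_def by auto
  have cov: "is_cover \<Phi> \<Delta> v w \<longleftrightarrow> b = a + 1"
  proof
    assume "is_cover \<Phi> \<Delta> v w" thus "b = a + 1" unfolding is_cover_def a_def b_def by blast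
  next
    assume ba: "b = a + 1"
    hence "(w, v) \<in> bruhat_edges \<Phi> \<Delta>" using cs by simp
    then obtain \<alpha> where "v = refl \<alpha> \<circ> w" "\<alpha> \<in> P" unfolding bruhat_edges_def by blast
    thus "is_cover \<Phi> \<Delta> v w" unfolding is_cover_def using ba a_def b_def \<open>(w, v) \<in> bruhat_edges \<Phi> \<Delta>\<close> by blast
  qed
  show ?thesis unfolding cov eqw ex_v lgw lgv using ab aw by auto
qed

end
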